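(* Let $\mathbf X$ be uniformly distributed on $[0,1]^d$ with $\|Y\|_\infty<\infty$, let $K\ge2$, $\gamma_2>0$ and $\gamma_1\ge e/2$. For every fixed binary axis-aligned tree with $K$ leaves (as in the context), $$\int_{[0,1]^d}\big|f_{\lambda^\star}(\mathbf x)-t_{\lambda^\star}(\mathbf x)\big|^2\mu(d\mathbf x)\le2\|Y\|_\infty^2K^2\Big(e^{-2\gamma_2}+\frac{\gamma_2^2K^2\log(2\gamma_1)}{\gamma_1}\Big).$$ Consequently the same bound holds for the expectation over any random tree independent of $\mathbf X$.
   Context: $\mu$ is the law of $\mathbf X$. Tree: root $[0,1]^d$; each internal node with cell $A$ and split $(j,\alpha)$, $\alpha\in[0,1]$, has left child $\{\mathbf x\in A:x^{(j)}<\alpha\}$ and right child $\{\mathbf x\in A:x^{(j)}\ge\alpha\}$; leaves $L_1,\dots,L_K$; internal splits $(j_k,\alpha_k)$, $k=1,\dots,K-1$. $\lambda^\star$: $\mathbf W_1^\star\in\mathbb R^{d\times(K-1)}$ with column $k$ the $j_k$-th unit vector, $(\mathbf b_1^\star)_k=-\alpha_k$; $(\mathbf W_2^\star)_{k,k'}=+1$ (resp. $-1$) if split $k$ is on the root-to-$L_{k'}$ path and that path goes to its right (resp. left) child, else $0$; $(\mathbf b_2^\star)_{k'}=-\ell(k')+\frac12$ with $\ell(k')$ the depth of $L_{k'}$; $(\mathbf W^\star_{\rm out})_{k'}=\frac12\mathbb E[Y\mid\mathbf X\in L_{k'}]$, $b^\star_{\rm out}=\frac12\sum_{k'}\mathbb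 E[Y\mid\mathbf X\in L_{k'}]$. With $\tau(u)=2\mathbf 1_{u\ge0}-1$, $\sigma_i(u)=\tanh(\gamma_iu)$ entrywise: $t_{\lambda^\star}(\mathbf x)=\mathbf W^{\star\top}_{\rm out}\tau(\mathbf W_2^{\star\top}\tau(\mathbf W_1^{\star\top}\mathbf x+\mathbf b_1^\star)+\mathbf b_2^\star)+b^\star_{\rm out}$, $f_{\lambda^\star}(\mathbf x)=\mathbf W^{\star\top}_{\rm out}\sigma_2(\mathbf W_2^{\star\top}\sigma_1(\mathbf W_1^{\star\top}\mathbf x+\mathbf b_1^\star)+\mathbf b_2^\star)+b^\star_{\rm out}$. *)

theory Defs
  imports "HOL-Probability.Probability"
begin

text \<open>Binary axis-aligned tree on [0,1]^d: a node stores the split coordinate j and threshold alpha;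
  left child = {x in A. x_j < alpha}, right child = {x in A. x_j >= alpha}.\<close>
datatype 'd tree = Leaf | Node 'd real "'d tree" "'d tree"

fun leaf_paths :: "'d tree \<Rightarrow> ('d \<times> real \<times> bool) list list" where
  "leaf_paths Leaf = [[]]"
| "leaf_paths (Node j a l r) =
     map (\<lambda>p. (j, a, False) # p) (leaf_paths l) @ map (\<lambda>p. (j, a, True) # p) (leaf_paths r)"

definition num_leaves :: "'d tree \<Rightarrow> nat" where
  "num_leaves t = length (leaf_paths t)"

fun thresholds :: "'d tree \<Rightarrow> real list" where
  "thresholds Leaf = []"
| "thresholds (Node j a l r) = a # thresholds l @ thresholds r"

definition valid_tree :: "'d tree \<Rightarrow> bool" where
  "valid_tree t \<longleftrightarrow> (\<forall>a \<in> set (thresholds t). 0 \<le> a \<and> a \<le> 1)"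

definition unit_cube :: "(real ^ 'd) set" where
  "unit_cube = {x. \<forall>i. 0 \<le> x $ i \<and> x $ i \<le> 1}"

definition leaf_cell :: "('d \<times> real \<times> bool) list \<Rightarrow> (real ^ 'd) set" where
  "leaf_cell p = {x \<in> unit_cube. \<forall>(j, a, b) \<in> set p. if b then a \<le> x $ j else x $ j < a}"

definition cond_mean :: "'s measure \<Rightarrow> ('s \<Rightarrow> real ^ 'd) \<Rightarrow> ('s \<Rightarrow> real) \<Rightarrow> (real ^ 'd) set \<Rightarrow> real" where
  "cond_mean M X Y L =
     (\<integral>\<omega>. indicator L (X \<omega>) * Y \<omega> \<partial>M) / measure M (X -` L \<inter> space M)"

definition step_act :: "real \<Rightarrow> real" where
  "step_act u = 2 * (if 0 \<le> u then 1 else 0) - 1"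

definition tanh_act :: "real \<Rightarrow> real \<Rightarrow> real" where
  "tanh_act g u = tanh (g * u)"

text \<open>The network with parameters lambda* and activations act1, act2, written out:
  the first layer has one unit per internal node k computing act1(x_{j_k} - alpha_k);
  the second layer has one unit per leaf k', computing
  act2(sum over splits on its path of (+-1) * first-layer unit - depth + 1/2);
  output weight for leaf k' is c_{k'}/2 and output bias is (sum c_{k'})/2, with
  c_{k'} = E[Y | X in L_{k'}].\<close>
definition tree_net ::
  "(real \<Rightarrow> real) \<Rightarrow> (real \<Rightarrow> real) \<Rightarrow> (('d \<times> real \<times> bool) list \<Rightarrow> real) \<Rightarrow> 'd tree \<Rightarrow> real ^ 'd \<Rightarrow> real" where
  "tree_net act1 act2 c t x =
     (\<Sum>p\<leftarrow>leaf_paths t. c p / 2 *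
        act2 ((\<Sum>s\<leftarrow>p. (case s of (j, a, b) \<Rightarrow> (if b then 1 else -1) * act1 (x $ j - a)))
              - real (length p) + 1 / 2))
     + (\<Sum>p\<leftarrow>leaf_paths t. c p) / 2"

definition t_star :: "'s measure \<Rightarrow> ('s \<Rightarrow> real ^ 'd) \<Rightarrow> ('s \<Rightarrow> real) \<Rightarrow> 'd tree \<Rightarrow> real ^ 'd \<Rightarrow> real" where
  "t_star M X Y t = tree_net step_act step_act (\<lambda>p. cond_mean M X Y (leaf_cell p)) t"

definition f_star :: "'s measure \<Rightarrow> ('s \<Rightarrow> real ^ 'd) \<Rightarrow> ('s \<Rightarrow> real) \<Rightarrow> real \<Rightarrow> real \<Rightarrow> 'd tree \<Rightarrow> real ^ 'd \<Rightarrow> real" where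
  "f_star M X Y g1 g2 t = tree_net (tanh_act g1) (tanh_act g2) (\<lambda>p. cond_mean M X Y (leaf_cell p)) t"

definition approx_err :: "'s measure \<Rightarrow> ('s \<Rightarrow> real ^ 'd) \<Rightarrow> ('s \<Rightarrow> real) \<Rightarrow> real \<Rightarrow> real \<Rightarrow> 'd tree \<Rightarrow> real" where
  "approx_err M X Y g1 g2 t =
     (\<integral>x. \<bar>f_star M X Y g1 g2 t x - t_star M X Y t x\<bar>^2 \<partial>(distr M lborel X))"

end

theory Submission imports Defs begin

lemma tanh_lip: "\<bar>tanh (a::real) - tanh b\<bar> \<le> \<bar>a - b\<bar>"
proof -
  have D: "\<And>x::real. (tanh has_real_derivative 1 - tanh x ^ 2) (at x)"
  proof -
    fix x :: real
    have "cosh x \<noteq> 0" using cosh_real_pos[of x] by linarith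
    from has_field_derivative_tanh[where g="\<lambda>x. x" and Db=1, OF this DERIV_ident]
    show "(tanh has_real_derivative 1 - tanh x ^ 2) (at x)" by simp
  qed
  have key: "\<And>a b::real. a < b \<Longrightarrow> \<bar>tanh b - tanh a\<bar> \<le> \<bar>b - a\<bar>"
  proof -
    fix a b :: real assume "a < b"
    from MVT2[OF this, of tanh "\<lambda>x. 1 - tanh x ^ 2"] D obtain z where
      "tanh b - tanh a = (b - a) * (1 - tanh z ^ 2)" by blast
    moreover have "0 \<le> 1 - tanh z ^ 2" "1 - tanh z ^ 2 \<le> 1"
      using tanh_real_bounds[of z] by (auto simp: abs_square_le_1 abs_less_iff)
    ultimately show "\<bar>tanh b - tanh a\<bar> \<le> \<bar>b - a\<bar>"
      by (simp add: abs_mult mult_left_le)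
  qed
  show ?thesis
    by (cases a b rule: linorder_cases) (use key in \<open>auto simp: abs_minus_commute\<close>)
qed

lemma one_minus_tanh: "0 \<le> 1 - tanh (y::real)" "1 - tanh y \<le> 2 * exp (- 2 * y)"
proof -
  show "0 \<le> 1 - tanh y" using tanh_real_lt_1[of y] by simp
  have p: "0 < exp (-2*y)" by simp
  have "1 - tanh y = 2 * exp (-2*y) / (1 + exp (-2*y))"
  proof -
    have "1 + exp (-2*y) \<noteq> 0" using p by linarith
    then show ?thesis unfolding tanh_real_altdef by (simp add: field_simps)
  qed
  also have "\<dots> \<le> 2 * exp (-2*y) / 1" using p by (intro divide_left_mono) (auto simp: add_pos_pos)
  also have "\<dots> = 2 * exp (-2*y)" by simp
  finally show "1 - tanh y \<le> 2 * exp (- 2 * y)" .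
qed

lemma tanh_step: assumes "g \<ge> 0" shows "\<bar>tanh (g*u) - step_act u\<bar> = 1 - tanh (g*\<bar>u\<bar>)"
proof (cases "u \<ge> 0")
  case True then show ?thesis using tanh_real_lt_1[of "g*u"] by (simp add: step_act_def)
next
  case False
  then have "\<bar>u\<bar> = -u" by simp
  then show ?thesis using False tanh_real_gt_neg1[of "g*u"] by (simp add: step_act_def)
qed

lemma cs_list: "(\<Sum>x\<leftarrow>xs. f x :: real)^2 \<le> real (length xs) * (\<Sum>x\<leftarrow>xs. (f x)^2)"
proof (induction xs)
  case Nil then show ?case by simp
next
  case (Cons a xs)
  define S where "S = (\<Sum>x\<leftarrow>xs. f x)"
  define Q where "Q = (\<Sum>x\<leftarrow>xs. (f x)^2)"
  define n where "n = real (length xs)"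
  have IH: "S^2 \<le> n * Q" using Cons unfolding S_def Q_def n_def .
  have Q0: "0 \<le> Q" unfolding Q_def by (rule sum_list_nonneg) auto
  have "2 * f a * S \<le> n * (f a)^2 + Q"
  proof (cases "n = 0")
    case True then have "S = 0" using IH Q0 by simp
    then show ?thesis using Q0 \<open>n = 0\<close> by simp
  next
    case False then have n0: "n > 0" unfolding n_def by simp
    have "0 \<le> (n * f a - S)^2" by simp
    then have "2 * n * f a * S \<le> n^2 * (f a)^2 + S^2" by (simp add: power2_eq_square algebra_simps)
    also have "\<dots> \<le> n^2 * (f a)^2 + n * Q" using IH by simp
    finally have "n * (2 * f a * S) \<le> n * (n * (f a)^2 + Q)" by (simp add: power2_eq_square algebra_simps)
    then show ?thesis using n0 by simp
  qed
  then have "(f a + S)^2 \<le> (n + 1) * ((f a)^2 + Q)" using IH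
    by (simp add: power2_eq_square algebra_simps)
  then show ?case unfolding S_def Q_def n_def by (simp add: add.commute)
qed


definition zarg :: "(real \<Rightarrow> real) \<Rightarrow> ('d \<times> real \<times> bool) list \<Rightarrow> real ^ 'd \<Rightarrow> real" where
  "zarg act p x = (\<Sum>s\<leftarrow>p. (case s of (j, a, b) \<Rightarrow> (if b then 1 else -1) * act (x $ j - a)))
              - real (length p) + 1 / 2"

lemma tree_net_zarg: "tree_net act1 act2 c t x =
  (\<Sum>p\<leftarrow>leaf_paths t. c p / 2 * act2 (zarg act1 p x)) + (\<Sum>p\<leftarrow>leaf_paths t. c p) / 2"
  unfolding tree_net_def zarg_def ..

lemma sum_pm_aux: "(\<forall>s\<in>set p. h s \<in> {0, -2::real}) \<Longrightarrow> (\<Sum>s\<leftarrow>p. h s) = 0 \<or> (\<Sum>s\<leftarrow>p. h s) \<le> -2"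
  by (induction p) auto

lemma zarg_step: "\<bar>zarg step_act p x\<bar> \<ge> 1/2"
proof -
  define h where "h = (\<lambda>s. (case s of (j, a, b) \<Rightarrow> (if b then 1 else -1) * step_act (x $ j - a)) - (1::real))"
  have "zarg step_act p x = (\<Sum>s\<leftarrow>p. h s) + 1/2"
    unfolding zarg_def h_def sum_list_subtractf by (simp add: sum_list_triv)
  moreover have "\<forall>s\<in>set p. h s \<in> {0, -2}"
    by (auto simp: h_def step_act_def split: prod.splits)
  ultimately show ?thesis using sum_pm_aux[of p h] by auto
qed

lemma abs_sum_list_le: "\<bar>\<Sum>x\<leftarrow>xs. (f x::real)\<bar> \<le> (\<Sum>x\<leftarrow>xs. \<bar>f x\<bar>)"
proof (induction xs)
  case (Cons a xs) then show ?case using abs_triangle_ineq[of "f a" "\<Sum>x\<leftarrow>xs. f x"] by simp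
qed simp

definition err1 :: "real \<Rightarrow> ('d \<times> real \<times> bool) \<Rightarrow> real ^ 'd \<Rightarrow> real" where
  "err1 g s x = (case s of (j, a, b) \<Rightarrow> \<bar>tanh_act g (x $ j - a) - step_act (x $ j - a)\<bar>)"

lemma zarg_diff: "\<bar>zarg (tanh_act g) p x - zarg step_act p x\<bar> \<le> (\<Sum>s\<leftarrow>p. err1 g s x)"
proof -
  have "zarg (tanh_act g) p x - zarg step_act p x =
     (\<Sum>s\<leftarrow>p. (case s of (j, a, b) \<Rightarrow> (if b then 1 else -1) * (tanh_act g (x $ j - a) - step_act (x $ j - a))))"
    unfolding zarg_def by (simp add: sum_list_subtractf[symmetric] split_def algebra_simps)
  also have "\<bar>\<dots>\<bar> \<le> (\<Sum>s\<leftarrow>p. \<bar>case s of (j, a, b) \<Rightarrow> (if b then 1 else -1) * (tanh_act g (x $ j - a) - step_act (x $ j - a))\<bar>)"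
    by (rule abs_sum_list_le)
  also have "\<dots> = (\<Sum>s\<leftarrow>p. err1 g s x)"
    by (rule arg_cong[where f=sum_list], rule map_cong) (auto simp: err1_def abs_mult split: prod.splits)
  finally show ?thesis .
qed

definition hb :: "real \<Rightarrow> ('d \<times> real \<times> bool) \<Rightarrow> real ^ 'd \<Rightarrow> real" where
  "hb g s x = (case s of (j, a, b) \<Rightarrow> indicator {y :: real ^ 'd. \<bar>y $ j - a\<bar> < ln (2*g) / (2*g)} x + 1 / g^2)"

lemma err1_bounds: assumes "g \<ge> exp 1 / 2"
  shows "0 \<le> err1 g s x" "err1 g s x \<le> 1" "(err1 g s x)^2 \<le> hb g s x"
proof -
  obtain j a b where s: "s = (j, a, b)" by (cases s) auto
  define u where "u = x $ j - a"
  have g0: "g > 0" using assms exp_gt_zero[of 1] by linarith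
  have E: "err1 g s x = 1 - tanh (g * \<bar>u\<bar>)"
    unfolding s err1_def u_def tanh_act_def using tanh_step[of g] g0 by simp
  show "0 \<le> err1 g s x" unfolding E using one_minus_tanh(1) .
  show le1: "err1 g s x \<le> 1" unfolding E using g0 by simp
  show "(err1 g s x)^2 \<le> hb g s x"
  proof (cases "\<bar>u\<bar> < ln (2*g) / (2*g)")
    case True
    then have "hb g s x = 1 + 1/g^2" unfolding hb_def s u_def by simp
    moreover have "(err1 g s x)^2 \<le> 1" using le1 \<open>0 \<le> err1 g s x\<close> by (simp add: abs_square_le_1)
    moreover have "0 \<le> 1/g^2" by simp
    ultimately show ?thesis by linarith
  next
    case False
    then have hb: "hb g s x = 1/g^2" unfolding hb_def s u_def by simp
    have "err1 g s x \<le> 2 * exp (- 2 * (g * \<bar>u\<bar>))" unfolding E by (rule one_minus_tanh(2))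
    also have "\<dots> \<le> 2 * exp (- ln (2*g))"
    proof -
      have "ln (2*g) / (2*g) \<le> \<bar>u\<bar>" using False by simp
      then have "ln (2*g) \<le> 2 * (g * \<bar>u\<bar>)" using g0 by (simp add: divide_le_eq mult_ac)
      then show ?thesis by simp
    qed
    also have "\<dots> = 1 / g" using g0 by (simp add: exp_minus inverse_eq_divide)
    finally have "err1 g s x \<le> 1/g" .
    then have "(err1 g s x)^2 \<le> (1/g)^2"
      using \<open>0 \<le> err1 g s x\<close> by (intro power_mono) auto
    then show ?thesis using hb by (simp add: power_divide)
  qed
qed


lemma path_bound:
  assumes g1: "g1 \<ge> exp 1 / 2" and g2: "g2 > 0" and len: "length p \<le> K"
  shows "\<bar>tanh_act g2 (zarg (tanh_act g1) p x) - step_act (zarg step_act p x)\<bar>^2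
     \<le> 8 * exp (-2*g2) + 2 * g2^2 * real K * (\<Sum>s\<leftarrow>p. hb g1 s x)"
proof -
  define Zf where "Zf = zarg (tanh_act g1) p x"
  define Zs where "Zs = zarg step_act p x"
  define A where "A = \<bar>tanh (g2 * Zs) - step_act Zs\<bar>"
  define D where "D = \<bar>tanh (g2 * Zf) - tanh (g2 * Zs)\<bar>"
  define S where "S = (\<Sum>s\<leftarrow>p. err1 g1 s x)"
  have A_eq: "A = 1 - tanh (g2 * \<bar>Zs\<bar>)" unfolding A_def using tanh_step[of g2 Zs] g2 by simp
  have "tanh (g2 * (1/2)) \<le> tanh (g2 * \<bar>Zs\<bar>)" using zarg_step[of p x] g2 unfolding Zs_def by simp
  then have "A \<le> 1 - tanh (g2 * (1/2))" unfolding A_eq by simp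
  also have "\<dots> \<le> 2 * exp (- 2 * (g2 * (1/2)))" by (rule one_minus_tanh(2))
  finally have A_le: "A \<le> 2 * exp (- g2)" by simp
  have A0: "0 \<le> A" unfolding A_def by simp
  have "A^2 \<le> (2 * exp (- g2))^2" using A0 A_le by (intro power_mono) auto
  also have "\<dots> = 4 * exp (-2*g2)" by (simp add: power2_eq_square exp_add[symmetric])
  finally have A2: "A^2 \<le> 4 * exp (-2*g2)" .
  have "D \<le> \<bar>g2 * Zf - g2 * Zs\<bar>" unfolding D_def by (rule tanh_lip)
  also have "\<dots> = g2 * \<bar>Zf - Zs\<bar>" using g2 by (simp add: abs_mult right_diff_distrib[symmetric])
  also have "\<dots> \<le> g2 * S" unfolding Zf_def Zs_def S_def using g2 zarg_diff by (intro mult_left_mono) auto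
  finally have D_le: "D \<le> g2 * S" .
  have D0: "0 \<le> D" unfolding D_def by simp
  have "D^2 \<le> (g2 * S)^2" using D0 D_le by (intro power_mono) auto
  also have "\<dots> = g2^2 * S^2" by (simp add: power_mult_distrib)
  finally have D2a: "D^2 \<le> g2^2 * S^2" .
  have "S^2 \<le> real (length p) * (\<Sum>s\<leftarrow>p. (err1 g1 s x)^2)" unfolding S_def by (rule cs_list)
  also have "\<dots> \<le> real K * (\<Sum>s\<leftarrow>p. hb g1 s x)"
  proof (rule mult_mono)
    show "real (length p) \<le> real K" using len by simp
    show "(\<Sum>s\<leftarrow>p. (err1 g1 s x)^2) \<le> (\<Sum>s\<leftarrow>p. hb g1 s x)"
      by (rule sum_list_mono) (rule err1_bounds(3)[OF g1])
    show "0 \<le> (\<Sum>s\<leftarrow>p. (err1 g1 s x)^2)"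
      by (rule sum_list_nonneg) auto
  qed simp
  finally have "S^2 \<le> real K * (\<Sum>s\<leftarrow>p. hb g1 s x)" .
  then have D2: "D^2 \<le> g2^2 * (real K * (\<Sum>s\<leftarrow>p. hb g1 s x))"
    using D2a by (meson mult_left_mono order_trans zero_le_power2)
  have W: "\<bar>tanh_act g2 Zf - step_act Zs\<bar> \<le> A + D"
    unfolding A_def D_def tanh_act_def by linarith
  have "\<bar>tanh_act g2 Zf - step_act Zs\<bar>^2 \<le> (A + D)^2"
    using W by (intro power_mono) auto
  also have "\<dots> \<le> 2 * A^2 + 2 * D^2"
    using sum_squares_ge_zero[of "A - D" 0] by (simp add: power2_eq_square algebra_simps)
  also have "\<dots> \<le> 8 * exp (-2*g2) + 2 * g2^2 * real K * (\<Sum>s\<leftarrow>p. hb g1 s x)"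
    using A2 D2 by simp
  finally show ?thesis unfolding Zf_def Zs_def .
qed

lemma pointwise_bound:
  assumes g1: "g1 \<ge> exp 1 / 2" and g2: "g2 > 0"
    and cB: "\<And>p. \<bar>c p\<bar> \<le> B" and nl: "length (leaf_paths t) = K"
    and len: "\<And>p. p \<in> set (leaf_paths t) \<Longrightarrow> length p \<le> K"
  shows "\<bar>tree_net (tanh_act g1) (tanh_act g2) c t x - tree_net step_act step_act c t x\<bar>^2
    \<le> 2 * B^2 * (real K)^2 * exp (-2*g2)
       + B^2 * (real K)^2 * g2^2 / 2 * (\<Sum>p\<leftarrow>leaf_paths t. \<Sum>s\<leftarrow>p. hb g1 s x)"
proof -
  define P where "P = leaf_paths t"
  define w where "w = (\<lambda>p. \<bar>tanh_act g2 (zarg (tanh_act g1) p x) - step_act (zarg step_act p x)\<bar>)"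
  define H where "H = (\<lambda>p. (\<Sum>s\<leftarrow>p. hb g1 s x))"
  have B0: "0 \<le> B" using cB[of undefined] by linarith
  have "tree_net (tanh_act g1) (tanh_act g2) c t x - tree_net step_act step_act c t x
      = (\<Sum>p\<leftarrow>P. c p / 2 * (tanh_act g2 (zarg (tanh_act g1) p x) - step_act (zarg step_act p x)))"
    unfolding tree_net_zarg P_def by (simp add: sum_list_subtractf[symmetric] right_diff_distrib)
  also have "\<bar>\<dots>\<bar> \<le> (\<Sum>p\<leftarrow>P. \<bar>c p / 2 * (tanh_act g2 (zarg (tanh_act g1) p x) - step_act (zarg step_act p x))\<bar>)"
    by (rule abs_sum_list_le)
  also have "\<dots> \<le> (\<Sum>p\<leftarrow>P. B / 2 * w p)"
    by (rule sum_list_mono) (auto simp: w_def abs_mult intro!: mult_right_mono cB)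
  finally have E1: "\<bar>tree_net (tanh_act g1) (tanh_act g2) c t x - tree_net step_act step_act c t x\<bar> \<le> (\<Sum>p\<leftarrow>P. B / 2 * w p)" .
  have "\<bar>tree_net (tanh_act g1) (tanh_act g2) c t x - tree_net step_act step_act c t x\<bar>^2 \<le> (\<Sum>p\<leftarrow>P. B / 2 * w p)^2"
    using E1 by (intro power_mono) auto
  also have "\<dots> \<le> real (length P) * (\<Sum>p\<leftarrow>P. (B / 2 * w p)^2)" by (rule cs_list)
  also have "\<dots> = real K * (B^2 / 4 * (\<Sum>p\<leftarrow>P. (w p)^2))"
    using nl unfolding P_def by (simp add: power_mult_distrib power_divide sum_list_const_mult[symmetric] mult_ac)
  finally have F1: "\<bar>tree_net (tanh_act g1) (tanh_act g2) c t x - tree_net step_act step_act c t x\<bar>^2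
     \<le> real K * (B^2 / 4 * (\<Sum>p\<leftarrow>P. (w p)^2))" .
  have "(\<Sum>p\<leftarrow>P. (w p)^2) \<le> (\<Sum>p\<leftarrow>P. 8 * exp (-2*g2) + 2 * g2^2 * real K * H p)"
    by (rule sum_list_mono) (unfold w_def H_def, rule path_bound[OF g1 g2 len], simp add: P_def)
  also have "\<dots> = real K * (8 * exp (-2*g2)) + 2 * g2^2 * real K * (\<Sum>p\<leftarrow>P. H p)"
    using nl unfolding P_def by (simp add: sum_list_addf sum_list_const_mult sum_list_triv)
  finally have F2: "(\<Sum>p\<leftarrow>P. (w p)^2) \<le> real K * (8 * exp (-2*g2)) + 2 * g2^2 * real K * (\<Sum>p\<leftarrow>P. H p)" .
  have "real K * (B^2 / 4 * (\<Sum>p\<leftarrow>P. (w p)^2)) \<le> real K * (B^2 / 4 * (real K * (8 * exp (-2*g2)) + 2 * g2^2 * real K * (\<Sum>p\<leftarrow>P. H p)))"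
    using F2 by (intro mult_left_mono) auto
  also have "\<dots> = 2 * B^2 * (real K)^2 * exp (-2*g2)
       + B^2 * (real K)^2 * g2^2 / 2 * (\<Sum>p\<leftarrow>P. H p)"
    by (simp add: power2_eq_square algebra_simps)
  finally show ?thesis using F1 unfolding P_def H_def by linarith
qed


lemma leaf_paths_ne: "leaf_paths t \<noteq> []"
  by (induction t) auto

lemma path_len: "p \<in> set (leaf_paths t) \<Longrightarrow> length p < length (leaf_paths t)"
proof (induction t arbitrary: p)
  case Leaf then show ?case by simp
next
  case (Node j a l r)
  have nl: "length (leaf_paths l) > 0" "length (leaf_paths r) > 0" using leaf_paths_ne by auto
  from Node.prems consider (L) q where "q \<in> set (leaf_paths l)" "p = (j,a,False)#q"
    | (R) q where "q \<in> set (leaf_paths r)" "p = (j,a,True)#q" by auto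
  then show ?case
  proof cases
    case L then show ?thesis using Node.IH(1)[of q] nl(2) by (simp del: length_greater_0_conv)
  next
    case R then show ?thesis using Node.IH(2)[of q] nl(1) by (simp del: length_greater_0_conv)
  qed
qed

lemma unit_cube_cbox: "(unit_cube :: (real ^ 'd) set) = cbox 0 1"
  unfolding unit_cube_def by (auto simp: mem_box_cart)

lemma emeasure_cbox_cart: "cbox a (b :: real ^ 'd) \<noteq> {} \<Longrightarrow>
   emeasure lborel (cbox a b) = ennreal (\<Prod>i\<in>UNIV. b$i - a$i)"
  using emeasure_eq_ennreal_measure[of lborel "cbox a b"] emeasure_lborel_cbox_finite[of a b]
    content_cbox_cart[of a b] by simp

lemma cube_measure: "emeasure lborel (unit_cube :: (real ^ 'd) set) = 1"
proof -
  have "(0::real^'d) \<in> cbox 0 1" by (simp add: mem_box_cart)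
  then have "cbox 0 (1::real^'d) \<noteq> {}" by blast
  then show ?thesis unfolding unit_cube_cbox by (simp add: emeasure_cbox_cart)
qed

lemma cube_sets: "(unit_cube :: (real ^ 'd) set) \<in> sets lborel"
  unfolding unit_cube_cbox by simp

lemma U_prob: "prob_space (uniform_measure lborel (unit_cube :: (real ^ 'd) set))"
  by (rule prob_space_uniform_measure) (simp_all add: cube_measure)

lemma slab_sets: "{y :: real ^ 'd. \<bar>y $ j - a\<bar> < e} \<in> sets lborel"
  by measurable

lemma slab_measure:
  assumes e: "e > 0"
  shows "measure (uniform_measure lborel (unit_cube :: (real ^ 'd) set)) {y. \<bar>y $ j - a\<bar> < e} \<le> 2 * e"
proof -
  define S where "S = {y :: real ^ 'd. \<bar>y $ j - a\<bar> < e}"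
  define l :: "real ^ 'd" where "l = (\<chi> i. if i = j then a - e else 0)"
  define u :: "real ^ 'd" where "u = (\<chi> i. if i = j then a + e else 1)"
  have sub: "unit_cube \<inter> S \<subseteq> cbox l u"
    unfolding unit_cube_def S_def l_def u_def by (auto simp: mem_box_cart)
  have lin: "l \<in> cbox l u" using e unfolding l_def u_def by (auto simp: mem_box_cart)
  then have ne: "cbox l u \<noteq> {}" by auto
  have P: "(\<Prod>i\<in>UNIV. u$i - l$i) = 2 * e"
    unfolding l_def u_def by (simp add: if_distrib prod.delta cong: if_cong)
  have Ss: "S \<in> sets lborel" unfolding S_def by (rule slab_sets)
  have "emeasure (uniform_measure lborel unit_cube) S = emeasure lborel (unit_cube \<inter> S) / 1"
    using emeasure_uniform_measure[OF cube_sets Ss] by (simp add: cube_measure)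
  also have "\<dots> = emeasure lborel (unit_cube \<inter> S)" by (simp add: divide_ennreal_def)
  also have "\<dots> \<le> emeasure lborel (cbox l u)" by (rule emeasure_mono[OF sub]) simp
  also have "\<dots> = ennreal (2 * e)" using emeasure_cbox_cart[OF ne] P by simp
  finally have le: "emeasure (uniform_measure lborel (unit_cube :: (real ^ 'd) set)) S \<le> ennreal (2 * e)" .
  have "measure (uniform_measure lborel (unit_cube :: (real ^ 'd) set)) S \<le> 2 * e"
    unfolding measure_def using le e by (simp add: enn2real_leI)
  then show ?thesis unfolding S_def .
qed


lemma int_sum_list:
  fixes F :: "'a \<Rightarrow> 'b \<Rightarrow> real"
  shows "(\<And>a. a \<in> set xs \<Longrightarrow> integrable M (F a)) \<Longrightarrow>
    integrable M (\<lambda>x. \<Sum>a\<leftarrow>xs. F a x) \<and> (\<integral>x. (\<Sum>a\<leftarrow>xs. F a x) \<partial>M) = (\<Sum>a\<leftarrow>xs. \<integral>x. F a x \<partial>M)"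
proof (induction xs)
  case Nil then show ?case by simp
next
  case (Cons a xs)
  then have ia: "integrable M (F a)" and ih: "integrable M (\<lambda>x. \<Sum>a\<leftarrow>xs. F a x)"
    "(\<integral>x. (\<Sum>a\<leftarrow>xs. F a x) \<partial>M) = (\<Sum>a\<leftarrow>xs. \<integral>x. F a x \<partial>M)" by auto
  show ?case using ia ih by (simp add: Bochner_Integration.integral_add)
qed

lemma ln_ge1: fixes g :: real assumes "g \<ge> exp 1 / 2" shows "1 \<le> ln (2 * g)" "g \<ge> 1"
proof -
  have "exp 1 \<le> 2 * g" using assms by simp
  moreover have "0 < exp (1::real)" by simp
  ultimately have "ln (exp 1) \<le> ln (2 * g)" by (subst ln_le_cancel_iff) linarith+
  then show "1 \<le> ln (2 * g)" by simp
  have "2 \<le> exp (1::real)" using exp_ge_add_one_self[of 1] by simp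
  then show "g \<ge> 1" using assms by simp
qed

lemma hb_int:
  assumes g: "g \<ge> exp 1 / 2"
  shows "integrable (uniform_measure lborel (unit_cube :: (real ^ 'd) set)) (hb g s)"
    "integral\<^sup>L (uniform_measure lborel (unit_cube :: (real ^ 'd) set)) (hb g s) \<le> 2 * ln (2*g) / g"
proof -
  let ?U = "uniform_measure lborel (unit_cube :: (real ^ 'd) set)"
  interpret U: prob_space ?U by (rule U_prob)
  obtain j a b where s: "s = (j, a, b)" by (cases s) auto
  define S where "S = {y :: real ^ 'd. \<bar>y $ j - a\<bar> < ln (2*g) / (2*g)}"
  have L: "1 \<le> ln (2*g)" "1 \<le> g" using ln_ge1[OF g] by auto
  have hb: "hb g s = (\<lambda>x. indicator S x + 1 / g^2)" unfolding hb_def s S_def by auto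
  have Ss: "S \<in> sets ?U" unfolding S_def using slab_sets by simp
  have iS: "integrable ?U (indicator S :: _ \<Rightarrow> real)"
    using Ss by (intro integrable_real_indicator) (auto simp: U.emeasure_finite less_top[symmetric])
  show "integrable ?U (hb g s)" unfolding hb using iS by simp
  have P1: "measure ?U UNIV = 1" using U.prob_space by simp
  have "integral\<^sup>L ?U (hb g s) = measure ?U S + 1 / g^2"
    unfolding hb using iS Ss by (simp add: Bochner_Integration.integral_add P1)
  also have "measure ?U S \<le> 2 * (ln (2*g) / (2*g))" unfolding S_def
    by (rule slab_measure) (use L in auto)
  also have "1 / g^2 \<le> ln (2*g) / g"
  proof -
    have "1 / g^2 = (1/g) * (1/g)" by (simp add: power2_eq_square)
    also have "\<dots> \<le> 1 * (1/g)" using L by (intro mult_right_mono) auto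
    also have "\<dots> \<le> ln (2*g) / g" using L by (simp add: divide_right_mono)
    finally show ?thesis .
  qed
  finally show "integral\<^sup>L ?U (hb g s) \<le> 2 * ln (2*g) / g" using L by simp
qed

lemma cond_mean_bound:
  assumes M: "prob_space M" and AEY: "AE \<omega> in M. \<bar>Y \<omega>\<bar> \<le> B" and B0: "0 \<le> B"
  shows "\<bar>cond_mean M X Y L\<bar> \<le> B"
proof -
  interpret M: prob_space M by (rule M)
  define E where "E = X -` L \<inter> space M"
  show ?thesis
  proof (cases "E \<in> sets M")
    case False
    then show ?thesis unfolding cond_mean_def E_def[symmetric] using B0 by (simp add: measure_notin_sets)
  next
    case True
    have iE: "integrable M (\<lambda>\<omega>. B * indicator E \<omega> :: real)"
      using True by (intro integrable_mult_right integrable_real_indicator) (auto simp: M.emeasure_finite less_top[symmetric])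
    have AE1: "AE \<omega> in M. \<bar>indicator L (X \<omega>) * Y \<omega>\<bar> \<le> B * indicator E \<omega>"
    proof (rule AE_mp[OF AEY AE_I2])
      fix \<omega> assume w: "\<omega> \<in> space M"
      show "\<bar>Y \<omega>\<bar> \<le> B \<longrightarrow> \<bar>indicator L (X \<omega>) * Y \<omega>\<bar> \<le> B * indicator E \<omega>"
        using w by (cases "X \<omega> \<in> L") (simp_all add: E_def indicator_def)
    qed
    have AE2: "AE \<omega> in M. 0 \<le> B * indicator E \<omega>" using B0 by auto
    have "\<bar>\<integral>\<omega>. indicator L (X \<omega>) * Y \<omega> \<partial>M\<bar> \<le> (\<integral>\<omega>. \<bar>indicator L (X \<omega>) * Y \<omega>\<bar> \<partial>M)"
      by (rule integral_abs_bound)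
    also have "\<dots> \<le> (\<integral>\<omega>. B * indicator E \<omega> \<partial>M)"
      by (rule integral_mono_AE'[OF iE AE1 AE2])
    also have "\<dots> = B * measure M E" using True by (simp add: Int_absorb2 sets.sets_into_space)
    finally have I: "\<bar>\<integral>\<omega>. indicator L (X \<omega>) * Y \<omega> \<partial>M\<bar> \<le> B * measure M E" .
    show ?thesis
    proof (cases "measure M E = 0")
      case True then show ?thesis unfolding cond_mean_def E_def[symmetric] using B0 by simp
    next
      case False
      then have "measure M E > 0" using measure_nonneg[of M E] by linarith
      define m where "m = measure M E"
      define J where "J = (\<integral>\<omega>. indicator L (X \<omega>) * Y \<omega> \<partial>M)"
      have m0: "m > 0" using \<open>measure M E > 0\<close> unfolding m_def .
      have "\<bar>J / m\<bar> = \<bar>J\<bar> / m" using m0 by (simp add: abs_divide)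
      also have "\<dots> \<le> B" using I m0 unfolding J_def m_def by (simp add: pos_divide_le_eq)
      finally show ?thesis unfolding cond_mean_def E_def[symmetric] J_def m_def .
    qed
  qed
qed


theorem mainTheorem6:
  fixes M :: "'s measure" and X :: "'s \<Rightarrow> real ^ 'd" and Y :: "'s \<Rightarrow> real"
    and B g1 g2 :: real and K :: nat
  assumes "prob_space M"
    and "X \<in> borel_measurable M" and "Y \<in> borel_measurable M"
    and "distr M lborel X = uniform_measure lborel unit_cube"
    and "AE \<omega> in M. \<bar>Y \<omega>\<bar> \<le> B"
    and "K \<ge> 2" and "g2 > 0" and "g1 \<ge> exp 1 / 2"
  shows "(\<forall>t :: 'd tree. valid_tree t \<and> num_leaves t = K \<longrightarrow>
            approx_err M X Y g1 g2 t
              \<le> 2 * B^2 * (real K)^2 * (exp (- 2 * g2) + g2^2 * (real K)^2 * ln (2 * g1) / g1))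
       \<and> (\<forall>T :: 'd tree measure. prob_space T \<and> (\<forall>t \<in> space T. valid_tree t \<and> num_leaves t = K) \<longrightarrow>
            (\<integral>t. approx_err M X Y g1 g2 t \<partial>T)
              \<le> 2 * B^2 * (real K)^2 * (exp (- 2 * g2) + g2^2 * (real K)^2 * ln (2 * g1) / g1))"
proof -
  interpret M: prob_space M by (rule assms(1))
  let ?U = "uniform_measure lborel (unit_cube :: (real ^ 'd) set)"
  interpret U: prob_space ?U by (rule U_prob)
  define R where "R = 2 * B^2 * (real K)^2 * (exp (- 2 * g2) + g2^2 * (real K)^2 * ln (2 * g1) / g1)"
  have g1: "g1 \<ge> exp 1 / 2" and g2: "g2 > 0" using assms by auto
  have L: "1 \<le> ln (2*g1)" "1 \<le> g1" using ln_ge1[OF g1] by auto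
  have "AE \<omega> in M. 0 \<le> B" using assms(5) by eventually_elim auto
  then have B0: "0 \<le> B" by simp
  have R0: "0 \<le> R" unfolding R_def using L by (intro mult_nonneg_nonneg add_nonneg_nonneg) auto
  have part1: "approx_err M X Y g1 g2 t \<le> R" if t: "num_leaves t = K" for t :: "'d tree"
  proof -
    define c where "c = (\<lambda>p. cond_mean M X Y (leaf_cell p))"
    define P where "P = leaf_paths t"
    have cB: "\<And>p. \<bar>c p\<bar> \<le> B" unfolding c_def by (rule cond_mean_bound[OF assms(1) assms(5) B0])
    have nl: "length (leaf_paths t) = K" using t unfolding num_leaves_def .
    have len: "\<And>p. p \<in> set (leaf_paths t) \<Longrightarrow> length p \<le> K"
      using path_len nl by fastforce
    define C1 where "C1 = B^2 * (real K)^2 * g2^2 / 2"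
    define G where "G = (\<lambda>x. 2 * B^2 * (real K)^2 * exp (-2*g2) + C1 * (\<Sum>p\<leftarrow>P. \<Sum>s\<leftarrow>p. hb g1 s x))"
    have C10: "0 \<le> C1" unfolding C1_def by simp
    have inner: "integrable ?U (\<lambda>x. \<Sum>s\<leftarrow>p. hb g1 s x) \<and>
       (\<integral>x. (\<Sum>s\<leftarrow>p. hb g1 s x) \<partial>?U) = (\<Sum>s\<leftarrow>p. \<integral>x. hb g1 s x \<partial>?U)" for p
      by (rule int_sum_list) (rule hb_int(1)[OF g1])
    have outer: "integrable ?U (\<lambda>x. \<Sum>p\<leftarrow>P. \<Sum>s\<leftarrow>p. hb g1 s x) \<and>
       (\<integral>x. (\<Sum>p\<leftarrow>P. \<Sum>s\<leftarrow>p. hb g1 s x) \<partial>?U) = (\<Sum>p\<leftarrow>P. \<integral>x. (\<Sum>s\<leftarrow>p. hb g1 s x) \<partial>?U)"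
      by (rule int_sum_list[where F="\<lambda>p x. \<Sum>s\<leftarrow>p. hb g1 s x"]) (use inner in blast)
    have iG: "integrable ?U G" unfolding G_def using outer by simp
    have IG: "integral\<^sup>L ?U G = 2 * B^2 * (real K)^2 * exp (-2*g2) + C1 * (\<Sum>p\<leftarrow>P. \<Sum>s\<leftarrow>p. \<integral>x. hb g1 s x \<partial>?U)"
    proof -
      have P1: "measure ?U UNIV = 1" using U.prob_space by simp
      show ?thesis unfolding G_def using outer inner P1 by (simp add: Bochner_Integration.integral_add)
    qed
    have "(\<Sum>p\<leftarrow>P. \<Sum>s\<leftarrow>p. \<integral>x. hb g1 s x \<partial>?U) \<le> (\<Sum>p\<leftarrow>P. \<Sum>s\<leftarrow>p. 2 * ln (2*g1) / g1)"
      by (intro sum_list_mono hb_int(2)[OF g1])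
    also have "\<dots> = (\<Sum>p\<leftarrow>P. real (length p) * (2 * ln (2*g1) / g1))"
      by (simp add: sum_list_triv)
    also have "\<dots> \<le> (\<Sum>p\<leftarrow>P. real K * (2 * ln (2*g1) / g1))"
      using L len unfolding P_def by (intro sum_list_mono mult_right_mono) auto
    also have "\<dots> = real K * (real K * (2 * ln (2*g1) / g1))"
      using nl unfolding P_def by (simp add: sum_list_triv)
    finally have S: "(\<Sum>p\<leftarrow>P. \<Sum>s\<leftarrow>p. \<integral>x. hb g1 s x \<partial>?U) \<le> real K * (real K * (2 * ln (2*g1) / g1))" .
    have pw: "\<bar>f_star M X Y g1 g2 t x - t_star M X Y t x\<bar>^2 \<le> G x" for x
      unfolding f_star_def t_star_def G_def C1_def P_def c_def[symmetric]
      by (rule pointwise_bound[OF g1 g2 cB nl len])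
    have "approx_err M X Y g1 g2 t = (\<integral>x. \<bar>f_star M X Y g1 g2 t x - t_star M X Y t x\<bar>^2 \<partial>?U)"
      unfolding approx_err_def assms(4) ..
    also have "\<dots> \<le> integral\<^sup>L ?U G"
    proof (rule integral_mono_AE'[OF iG])
      show "AE x in ?U. \<bar>f_star M X Y g1 g2 t x - t_star M X Y t x\<bar>^2 \<le> G x" using pw by simp
      show "AE x in ?U. 0 \<le> G x" using pw by (auto intro: order_trans[OF zero_le_power2])
    qed
    also have "\<dots> \<le> 2 * B^2 * (real K)^2 * exp (-2*g2) + C1 * (real K * (real K * (2 * ln (2*g1) / g1)))"
      unfolding IG using S C10 by (intro add_left_mono mult_left_mono) auto
    also have "\<dots> = 2 * B^2 * (real K)^2 * exp (-2*g2) + B^2 * (real K)^2 * (g2^2 * (real K)^2 * ln (2 * g1) / g1)"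
      unfolding C1_def by (simp add: power2_eq_square field_simps)
    also have "\<dots> \<le> R"
    proof -
      have "0 \<le> B^2 * (real K)^2 * (g2^2 * (real K)^2 * ln (2 * g1) / g1)" using L by simp
      then show ?thesis unfolding R_def by (simp add: algebra_simps)
    qed
    finally show ?thesis .
  qed
  show ?thesis
    unfolding R_def[symmetric]
  proof (intro conjI allI impI)
    fix t :: "'d tree" assume "valid_tree t \<and> num_leaves t = K"
    then show "approx_err M X Y g1 g2 t \<le> R" using part1 by blast
  next
    fix T :: "'d tree measure"
    assume T: "prob_space T \<and> (\<forall>t \<in> space T. valid_tree t \<and> num_leaves t = K)"
    interpret T: prob_space T using T by blast
    have "(\<integral>t. approx_err M X Y g1 g2 t \<partial>T) \<le> (\<integral>t. R \<partial>T)"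
      by (rule integral_mono') (use T part1 R0 in auto)
    also have "\<dots> = R" by (simp add: T.prob_space)
    finally show "(\<integral>t. approx_err M X Y g1 g2 t \<partial>T) \<le> R" .
  qed
qed

end
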